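(* Let $s\ge0$, $n=2s+1$, and let $\mathcal{G}_{2s+1}\subset GL_{2s+1}(\mathbb{Z})$ be the group generated by the linear maps $\sigma_1,\dotsc,\sigma_{2s+1}$ of $\mathbb{Z}^{2s+1}$ given in coordinates $k=(k_1,\dotsc,k_{2s+1})$ by \[ \sigma_1:\ k_1\mapsto k_1,\quad k_j\mapsto k_j+k_1\ (j>1); \] \[ \sigma_i\ (2\le i\le 2s+1):\ k_{i-1}\mapsto 2k_{i-1}-k_i,\quad k_i\mapsto k_{i-1},\quad k_j\mapsto k_j\ (j\ne i-1,i). \] For nonzero $k\in\mathbb{Z}^{2s+1}$ put $\gamma=\gcd(k_1,\dotsc,k_{2s+1})$, $\alpha=\#\{i:\ k_i/\gamma\equiv1\pmod2\}$, $\delta=|2\alpha-2s-2|$ and $x_{2s+1}=k_1-k_2+k_3-\dotsb+k_{2s+1}$. Then the triple $(\gamma,\delta,x_{2s+1})$ is invariant under $\mathcal{G}_{2s+1}$: for every $g\in\mathcal{G}_{2s+1}$ and every nonzero $k$, the vectors $k$ and $gk$ have the same values of $\gamma$, $\delta$ and $x_{2s+1}$. *)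

theory Defs
  imports Main
begin

text \<open>Vectors k = (k_1,...,k_n) in Z^n are represented as int lists of length n,
  with k_i = k ! (i - 1).\<close>

definition sigma :: "nat \<Rightarrow> int list \<Rightarrow> int list" where
  "sigma i k =
     (if i = 1 then map (\<lambda>j. if j = 0 then k ! 0 else k ! j + k ! 0) [0..<length k]
      else k[i - 2 := 2 * k ! (i - 2) - k ! (i - 1), i - 1 := k ! (i - 2)])"

inductive_set Gen_group :: "nat \<Rightarrow> (int list \<Rightarrow> int list) set" for n :: nat where
  gid: "id \<in> Gen_group n"
| gsig: "g \<in> Gen_group n \<Longrightarrow> i \<in> {1..n} \<Longrightarrow> sigma i \<circ> g \<in> Gen_group n"
| ginv: "g \<in> Gen_group n \<Longrightarrow> i \<in> {1..n} \<Longrightarrow>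
           inv_into {k. length k = n} (sigma i) \<circ> g \<in> Gen_group n"

definition gamma :: "int list \<Rightarrow> int" where
  "gamma k = Gcd (set k)"

definition alpha :: "int list \<Rightarrow> nat" where
  "alpha k = card {i. i < length k \<and> (k ! i div gamma k) mod 2 = 1}"

definition delta :: "nat \<Rightarrow> int list \<Rightarrow> int" where
  "delta s k = \<bar>2 * int (alpha k) - 2 * int s - 2\<bar>"

definition altsum :: "int list \<Rightarrow> int" where
  "altsum k = (\<Sum>i<length k. (-1) ^ i * k ! i)"

end

theory Submission
  imports Defs
begin

lemma len_sigma[simp]: "length (sigma i k) = length k"
  by (simp add: sigma_def)

definition tau :: "nat \<Rightarrow> int list \<Rightarrow> int list" where
  "tau i k =
     (if i = 1 then map (\<lambda>j. if j = 0 then k ! 0 else k ! j - k ! 0) [0..<length k]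
      else k[i - 2 := k ! (i - 1), i - 1 := 2 * k ! (i - 1) - k ! (i - 2)])"

lemma len_tau[simp]: "length (tau i k) = length k"
  by (simp add: tau_def)

lemma nth_sigma:
  assumes "1 \<le> i" "i \<le> length k" "j < length k"
  shows "sigma i k ! j = (if i = 1 then (if j = 0 then k!0 else k!j + k!0)
     else if j = i-2 then 2*k!(i-2) - k!(i-1) else if j = i-1 then k!(i-2) else k!j)"
  using assms by (auto simp: sigma_def nth_list_update)

lemma nth_tau:
  assumes "1 \<le> i" "i \<le> length k" "j < length k"
  shows "tau i k ! j = (if i = 1 then (if j = 0 then k!0 else k!j - k!0)
     else if j = i-2 then k!(i-1) else if j = i-1 then 2*k!(i-1) - k!(i-2) else k!j)"
  using assms by (auto simp: tau_def nth_list_update)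

lemma tau_sigma: "1 \<le> i \<Longrightarrow> i \<le> length k \<Longrightarrow> tau i (sigma i k) = k"
  apply (subgoal_tac "0 < length k")
  by (rule nth_equalityI) (auto simp: nth_tau nth_sigma)

lemma sigma_tau: "1 \<le> i \<Longrightarrow> i \<le> length k \<Longrightarrow> sigma i (tau i k) = k"
  apply (subgoal_tac "0 < length k")
  by (rule nth_equalityI) (auto simp: nth_tau nth_sigma)

lemma inv_tau:
  assumes "1 \<le> i" "i \<le> n" "length k = n"
  shows "inv_into {k. length k = n} (sigma i) k = tau i k"
proof (rule inv_into_f_eq)
  show "inj_on (sigma i) {k. length k = n}"
    by (rule inj_on_inverseI[where g="tau i"]) (use assms in \<open>auto simp: tau_sigma\<close>)
qed (use assms in \<open>auto simp: sigma_tau\<close>)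

lemma Gcd_eq_int:
  fixes A B :: "int set"
  assumes "\<And>d. (\<forall>x\<in>A. d dvd x) \<Longrightarrow> (\<forall>x\<in>B. d dvd x)"
    and "\<And>d. (\<forall>x\<in>B. d dvd x) \<Longrightarrow> (\<forall>x\<in>A. d dvd x)"
  shows "Gcd A = Gcd B"
proof -
  have "Gcd A dvd Gcd B" using assms(1)[of "Gcd A"] by (meson Gcd_dvd Gcd_greatest)
  moreover have "Gcd B dvd Gcd A" using assms(2)[of "Gcd B"] by (meson Gcd_dvd Gcd_greatest)
  ultimately show ?thesis by (simp add: zdvd_antisym_nonneg)
qed

lemma gamma_sigma:
  assumes i: "1 \<le> i" "i \<le> length k"
  shows "gamma (sigma i k) = gamma k"
  unfolding gamma_def
proof (rule Gcd_eq_int)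
  fix d assume "\<forall>x\<in>set k. d dvd x"
  then have H: "\<And>j. j < length k \<Longrightarrow> d dvd k ! j" by (simp add: all_set_conv_all_nth)
  have "d dvd k!0" using H[of 0] i by force
    then show "\<forall>x\<in>set (sigma i k). d dvd x"
    unfolding all_set_conv_all_nth using i by (auto simp: nth_sigma H)
next
  fix d assume "\<forall>x\<in>set (sigma i k). d dvd x"
  then have H: "\<And>j. j < length k \<Longrightarrow> d dvd sigma i k ! j" by (simp add: all_set_conv_all_nth)
  show "\<forall>x\<in>set k. d dvd x"
    unfolding all_set_conv_all_nth
  proof (intro allI impI)
    fix j assume j: "j < length k"
    have "d dvd tau i (sigma i k) ! j"
    proof -
      have "d dvd sigma i k ! 0" using H[of 0] j by force
      then show ?thesis using i j H by (auto simp: nth_tau)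
    qed
    then show "d dvd k ! j" using i by (simp add: tau_sigma)
  qed
qed

lemma sum_two:
  fixes f g :: "nat \<Rightarrow> int"
  assumes "a \<noteq> b" "a < n" "b < n" "\<And>j. j < n \<Longrightarrow> j \<noteq> a \<Longrightarrow> j \<noteq> b \<Longrightarrow> f j = g j"
    "f a + f b = g a + g b"
  shows "(\<Sum>j<n. f j) = (\<Sum>j<n. g j)"
proof -
  have "(\<Sum>j<n. f j - g j) = (\<Sum>j\<in>{a,b}. f j - g j)"
    by (rule sum.mono_neutral_right) (use assms in auto)
  also have "\<dots> = 0" using assms by simp
  finally show ?thesis by (simp add: sum_subtractf)
qed

lemma alt_zero: "(\<Sum>j<2*s. (-1::int)^j) = 0"
  by (induction s) auto

lemma altsum_sigma:
  assumes i: "1 \<le> i" "i \<le> length k" and len: "length k = 2*s+1"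
  shows "altsum (sigma i k) = altsum k"
proof (cases "i = 1")
  case True
  have "altsum (sigma i k) = (\<Sum>j<Suc (2*s). (-1)^j * sigma i k ! j)"
    using len by (simp add: altsum_def)
  also have "\<dots> = k!0 + (\<Sum>j<2*s. (-1)^(Suc j) * (k ! Suc j + k!0))"
    unfolding sum.lessThan_Suc_shift using True i len by (simp add: nth_sigma)
  also have "\<dots> = k!0 + (\<Sum>j<2*s. (-1)^(Suc j) * k ! Suc j) - k!0 * (\<Sum>j<2*s. (-1)^j)"
    by (simp add: algebra_simps sum.distrib sum_distrib_left sum_subtractf sum_negf)
  also have "\<dots> = (\<Sum>j<Suc (2*s). (-1)^j * k ! j)"
    unfolding sum.lessThan_Suc_shift alt_zero by simp
  also have "\<dots> = altsum k" using len by (simp add: altsum_def)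
  finally show ?thesis .
next
  case False
  then obtain m where m: "i = Suc (Suc m)" using i by (cases i; cases "i - 1") auto
  show ?thesis unfolding altsum_def len_sigma
    apply (rule sum_two[where a="i-2" and b="i-1"])
    using m i by (auto simp: nth_sigma algebra_simps)
qed


lemma alpha_sum: "int (alpha k) = (\<Sum>j<length k. if odd (k!j div gamma k) then 1 else 0)"
proof -
  have "{i. i < length k \<and> (k ! i div gamma k) mod 2 = 1} = {j\<in>{..<length k}. odd (k!j div gamma k)}"
    by (auto simp: odd_iff_mod_2_eq_one)
  then have "alpha k = card {j\<in>{..<length k}. odd (k!j div gamma k)}"
    by (simp add: alpha_def)
  also have "int \<dots> = (\<Sum>j\<in>{j\<in>{..<length k}. odd (k!j div gamma k)}. 1)"
    by simp
  also have "\<dots> = (\<Sum>j<length k. if odd (k!j div gamma k) then 1 else 0)"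
    by (rule sum.inter_filter) simp
  finally show ?thesis .
qed

lemma par_lemma:
  fixes c a b :: int
  assumes "c dvd a" "c dvd b"
  shows "odd ((2*a - b) div c) \<longleftrightarrow> odd (b div c)"
proof -
  have "(2*a - b) div c = 2*a div c - b div c" using assms by (simp add: div_diff)
  also have "2*a div c = 2*(a div c)" using assms by (simp add: div_mult_swap)
  finally show ?thesis by simp
qed

lemma delta_sigma:
  assumes i: "1 \<le> i" "i \<le> length k" and len: "length k = 2*s+1"
  shows "delta s (sigma i k) = delta s k"
proof -
  define c where "c = gamma k"
  have gs: "gamma (sigma i k) = c" using gamma_sigma[OF i] c_def by simp
  have dv: "\<And>j. j < length k \<Longrightarrow> c dvd k ! j"
    unfolding c_def gamma_def by (simp add: Gcd_dvd)
  define p where "p x = (if odd (x div c) then 1 else (0::int))" for x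
  have A: "int (alpha k) = (\<Sum>j<length k. p (k!j))"
    using alpha_sum[of k] by (simp add: p_def c_def)
  have B: "int (alpha (sigma i k)) = (\<Sum>j<length k. p (sigma i k!j))"
    using alpha_sum[of "sigma i k"] by (simp add: p_def gs)
  have k0: "c dvd k!0" using dv[of 0] len by simp
  show ?thesis
  proof (cases "i = 1")
    case True
    show ?thesis
    proof (cases "odd (k!0 div c)")
      case False
      have "(\<Sum>j<length k. p (sigma i k!j)) = (\<Sum>j<length k. p (k!j))"
      proof (rule sum.cong)
        fix j assume "j \<in> {..<length k}"
        then have j: "j < length k" by simp
        show "p (sigma i k!j) = p (k!j)"
        proof (cases "j = 0")
          case True then show ?thesis using nth_sigma[OF i j] \<open>i = 1\<close> by simp
        next
          case False
          have "(k!j + k!0) div c = k!j div c + k!0 div c" using dv[OF j] k0 by (simp add: div_add)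
          then show ?thesis using False \<open>\<not> odd (k!0 div c)\<close> i j \<open>i = 1\<close> by (simp add: nth_sigma p_def)
        qed
      qed simp
      then show ?thesis unfolding delta_def using A B by simp
    next
      case True
      have "(\<Sum>j<length k. p (sigma i k!j)) = p (sigma i k ! 0) + (\<Sum>j<2*s. p (sigma i k ! Suc j))"
        using len sum.lessThan_Suc_shift[of "\<lambda>j. p (sigma i k ! j)" "2*s"] by (simp del: sum.lessThan_Suc)
      also have "\<dots> = 1 + (\<Sum>j<2*s. 1 - p (k ! Suc j))"
      proof -
        have "p (sigma i k ! 0) = 1" using True i \<open>i = 1\<close> len by (simp add: nth_sigma p_def)
        moreover have "p (sigma i k ! Suc j) = 1 - p (k ! Suc j)" if "j < 2*s" for j
        proof -
          have j: "Suc j < length k" using that len by simp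
          have "(k!Suc j + k!0) div c = k!Suc j div c + k!0 div c" using dv[OF j] k0 by (simp add: div_add)
          then show ?thesis using True i j \<open>i = 1\<close> by (simp add: nth_sigma p_def)
        qed
        ultimately show ?thesis by simp
      qed
      also have "\<dots> = 1 + 2 * int s - (\<Sum>j<2*s. p (k ! Suc j))"
        by (simp add: sum_subtractf)
      finally have B': "int (alpha (sigma i k)) = 1 + 2 * int s - (\<Sum>j<2*s. p (k ! Suc j))"
        using B by simp
      have "int (alpha k) = p (k!0) + (\<Sum>j<2*s. p (k ! Suc j))"
        using A len sum.lessThan_Suc_shift[of "\<lambda>j. p (k ! j)" "2*s"] by (simp del: sum.lessThan_Suc)
      moreover have "p (k!0) = 1" using True by (simp add: p_def)
      ultimately show ?thesis unfolding delta_def using B' by simp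
    qed
  next
    case False
    then obtain m where m: "i = Suc (Suc m)" using i by (cases i; cases "i - 1") auto
    have "(\<Sum>j<length k. p (sigma i k!j)) = (\<Sum>j<length k. p (k!j))"
    proof (rule sum_two[where a="i-2" and b="i-1"])
      have d1: "c dvd k!m" "c dvd k!Suc m" using dv i m by auto
      show "p (sigma i k ! (i - 2)) + p (sigma i k ! (i - 1)) = p (k ! (i - 2)) + p (k ! (i - 1))"
      proof -
        have "2*k!m div c = 2*(k!m div c)" using d1 by (simp add: div_mult_swap)
        then show ?thesis using m i d1 by (simp add: nth_sigma p_def par_lemma)
      qed
    qed (use m i in \<open>auto simp: nth_sigma\<close>)
    then show ?thesis unfolding delta_def using A B by simp
  qed
qed

lemma all_sigma:
  assumes "1 \<le> i" "i \<le> length k" "length k = 2*s+1"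
  shows "gamma (sigma i k) = gamma k \<and> delta s (sigma i k) = delta s k \<and> altsum (sigma i k) = altsum k"
  using assms gamma_sigma delta_sigma altsum_sigma by blast

lemma main_ind:
  assumes "g \<in> Gen_group n" "n = 2 * s + 1"
  shows "\<forall>k. length k = n \<longrightarrow> length (g k) = n \<and> gamma (g k) = gamma k \<and> delta s (g k) = delta s k \<and> altsum (g k) = altsum k"
  using assms(1)
proof (induction rule: Gen_group.induct)
  case gid
  then show ?case by simp
next
  case (gsig g i)
  show ?case
  proof (intro allI impI)
    fix k :: "int list" assume k: "length k = n"
    have IH: "length (g k) = n" "gamma (g k) = gamma k" "delta s (g k) = delta s k" "altsum (g k) = altsum k"
      using gsig.IH k by auto
    have "gamma (sigma i (g k)) = gamma (g k) \<and> delta s (sigma i (g k)) = delta s (g k) \<and> altsum (sigma i (g k)) = altsum (g k)"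
      using all_sigma[of i "g k" s] gsig.hyps(2) IH(1) assms(2) by simp
    then show "length ((sigma i \<circ> g) k) = n \<and> gamma ((sigma i \<circ> g) k) = gamma k \<and> delta s ((sigma i \<circ> g) k) = delta s k \<and> altsum ((sigma i \<circ> g) k) = altsum k"
      using IH by simp
  qed
next
  case (ginv g i)
  show ?case
  proof (intro allI impI)
    fix k :: "int list" assume k: "length k = n"
    have IH: "length (g k) = n" "gamma (g k) = gamma k" "delta s (g k) = delta s k" "altsum (g k) = altsum k"
      using ginv.IH k by auto
    have e: "inv_into {k. length k = n} (sigma i) (g k) = tau i (g k)"
      using inv_tau[of i n "g k"] ginv.hyps(2) IH(1) by simp
    have "gamma (sigma i (tau i (g k))) = gamma (tau i (g k)) \<and> delta s (sigma i (tau i (g k))) = delta s (tau i (g k)) \<and> altsum (sigma i (tau i (g k))) = altsum (tau i (g k))"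
      using all_sigma[of i "tau i (g k)" s] ginv.hyps(2) IH(1) assms(2) by simp
    moreover have "sigma i (tau i (g k)) = g k" using sigma_tau[of i "g k"] ginv.hyps(2) IH(1) by simp
    ultimately show "length ((inv_into {k. length k = n} (sigma i) \<circ> g) k) = n \<and> gamma ((inv_into {k. length k = n} (sigma i) \<circ> g) k) = gamma k \<and> delta s ((inv_into {k. length k = n} (sigma i) \<circ> g) k) = delta s k \<and> altsum ((inv_into {k. length k = n} (sigma i) \<circ> g) k) = altsum k"
      using IH e by simp
  qed
qed

theorem mainTheorem6:
  fixes s n :: nat and g :: "int list \<Rightarrow> int list" and k :: "int list"
  assumes "n = 2 * s + 1"
    and "g \<in> Gen_group n"
    and "length k = n"
    and "k \<noteq> replicate n 0"
  shows "gamma (g k) = gamma k \<and> delta s (g k) = delta s k \<and> altsum (g k) = altsum k"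
  using main_ind[OF assms(2,1)] assms(3) by blast

end
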